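(* Let the Hamiltonians satisfy (H) and $F$ satisfy (F). Fix $n\ge0$, let $(U_i^{\alpha,n})_{\alpha,i}$ be given (with $U_0^{\alpha,n}=U_0^n$ for all $\alpha$) and compute $(U_i^{\alpha,n+1})_{\alpha,i}$ by the scheme (S). If there is $K\in\mathbb R$ with $K\le W_i^{\alpha,n}$ for all $i\ge0$ and $\alpha=1,\dots,N$, then $$\pi_\alpha^-(-K)\le p_{i,+}^{\alpha,n}\le\pi_\alpha^+(-K)\quad(i\ge1,\ \alpha=1,\dots,N),\qquad \underline p_\alpha(-K)\le p_{0,+}^{\alpha,n}\le\pi_\alpha^+(-K)\quad(\alpha=1,\dots,N).$$
   Context: Hamiltonians (H): $H_\alpha:\mathbb R\to\mathbb R$, $\alpha=1,\dots,N$, are Lipschitz continuous, coercive and quasi-convex (sublevel sets convex). There is $p_0^\alpha$ with $H_\alpha$ non-increasing on $(-\infty,p_0^\alpha]$ and non-decreasing on $[p_0^\alpha,\infty)$; $H_\alpha^-(p)=H_\alpha(\min(p,p_0^\alpha))$, $H_\alpha^+(p)=H_\alpha(\max(p,p_0^\alpha))$; $A_\alpha=\min_{\mathbb R}H_\alpha$. Junction function (F): $F:\mathbb R^N\to\mathbb R$ is piecewise $C^1$, strictly decreasing in each variable $p_\alpha$, and $F(p)\to+\infty$ as $(p_1)_-+\dots+(p_N)_-\to+\infty$ ($r_-=\max(-r,0)$). Generalized inverses: $\pi_\alpha^+(a)=\sup\{p:H_\alpha^+(p)=\max(a,A_\alpha)\}$, $\pi_\alpha^-(a)=\inf\{p:H_\alpha^-(p)=\max(a,A_\alpha)\}$.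 For every $K$ there is $\underline p(K)\in\mathbb R^N$ such that $F(p)\le K$ implies $p_\alpha\ge\underline p_\alpha(K)$ for all $\alpha$; such a choice is fixed. Scheme (S) (one time step): $p_{i,+}^{\alpha,n}=(U_{i+1}^{\alpha,n}-U_i^{\alpha,n})/\Delta x$, $p_{i,-}^{\alpha,n}=(U_i^{\alpha,n}-U_{i-1}^{\alpha,n})/\Delta x$; $\frac{U_i^{\alpha,n+1}-U_i^{\alpha,n}}{\Delta t}+\max\{H_\alpha^+(p_{i,-}^{\alpha,n}),H_\alpha^-(p_{i,+}^{\alpha,n})\}=0$ for $i\ge1$; $\frac{U_0^{n+1}-U_0^n}{\Delta t}+F(p_{0,+}^{1,n},\dots,p_{0,+}^{N,n})=0$. $W_i^{\alpha,n}=(U_i^{\alpha,n+1}-U_i^{\alpha,n})/\Delta t$. *)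

theory Defs
  imports "HOL-Analysis.Analysis"
begin

definition Hminus :: "(real \<Rightarrow> real) \<Rightarrow> real \<Rightarrow> real \<Rightarrow> real" where
  "Hminus H p0 p = H (min p p0)"

definition Hplus :: "(real \<Rightarrow> real) \<Rightarrow> real \<Rightarrow> real \<Rightarrow> real" where
  "Hplus H p0 p = H (max p p0)"

definition Amin :: "(real \<Rightarrow> real) \<Rightarrow> real" where
  "Amin H = Inf (range H)"

definition pi_plus :: "(real \<Rightarrow> real) \<Rightarrow> real \<Rightarrow> real \<Rightarrow> real" where
  "pi_plus H p0 a = Sup {p. Hplus H p0 p = max a (Amin H)}"

definition pi_minus :: "(real \<Rightarrow> real) \<Rightarrow> real \<Rightarrow> real \<Rightarrow> real" where
  "pi_minus H p0 a = Inf {p. Hminus H p0 p = max a (Amin H)}"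

definition hyp_H :: "(real \<Rightarrow> real) \<Rightarrow> real \<Rightarrow> bool" where
  "hyp_H H p0 \<longleftrightarrow>
     (\<exists>L. \<forall>x y. \<bar>H x - H y\<bar> \<le> L * \<bar>x - y\<bar>) \<and>
     filterlim H at_top at_infinity \<and>
     (\<forall>a. convex {p. H p \<le> a}) \<and>
     (\<forall>x y. x \<le> y \<longrightarrow> y \<le> p0 \<longrightarrow> H y \<le> H x) \<and>
     (\<forall>x y. p0 \<le> x \<longrightarrow> x \<le> y \<longrightarrow> H x \<le> H y)"

definition C1_fun :: "(real^'n \<Rightarrow> real) \<Rightarrow> bool" where
  "C1_fun f \<longleftrightarrow> (\<exists>f' :: (real^'n) \<Rightarrow> ((real^'n) \<Rightarrow>\<^sub>L real).
     (\<forall>x. (f has_derivative blinfun_apply (f' x)) (at x)) \<and> continuous_on UNIV f')"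

definition piecewise_C1 :: "(real^'n \<Rightarrow> real) \<Rightarrow> bool" where
  "piecewise_C1 F \<longleftrightarrow> continuous_on UNIV F \<and>
     (\<exists>(Fs :: nat \<Rightarrow> real^'n \<Rightarrow> real) m. (\<forall>j<m. C1_fun (Fs j)) \<and>
        (\<forall>p. \<exists>j<m. F p = Fs j p))"

definition hyp_F :: "(real^'n \<Rightarrow> real) \<Rightarrow> bool" where
  "hyp_F F \<longleftrightarrow> piecewise_C1 F \<and>
     (\<forall>p \<alpha> s t. s < t \<longrightarrow>
        F (\<chi> \<beta>. if \<beta> = \<alpha> then t else p $ \<beta>) < F (\<chi> \<beta>. if \<beta> = \<alpha> then s else p $ \<beta>)) \<and>
     (\<forall>M. \<exists>R. \<forall>p. (\<Sum>\<alpha>\<in>UNIV. max (- (p $ \<alpha>)) 0) \<ge> R \<longrightarrow> F p \<ge> M)"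

text \<open>U \<alpha> i is the value on branch \<alpha> at grid point i (one fixed time level).\<close>
definition pplus :: "real \<Rightarrow> ('n \<Rightarrow> nat \<Rightarrow> real) \<Rightarrow> 'n \<Rightarrow> nat \<Rightarrow> real" where
  "pplus dx U \<alpha> i = (U \<alpha> (Suc i) - U \<alpha> i) / dx"

definition pminus :: "real \<Rightarrow> ('n \<Rightarrow> nat \<Rightarrow> real) \<Rightarrow> 'n \<Rightarrow> nat \<Rightarrow> real" where
  "pminus dx U \<alpha> i = (U \<alpha> i - U \<alpha> (i - 1)) / dx"

definition scheme_step ::
  "('n \<Rightarrow> real \<Rightarrow> real) \<Rightarrow> ('n \<Rightarrow> real) \<Rightarrow> (real^'n \<Rightarrow> real) \<Rightarrow> real \<Rightarrow> real
   \<Rightarrow> ('n \<Rightarrow> nat \<Rightarrow> real) \<Rightarrow> 'n \<Rightarrow> nat \<Rightarrow> real" where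
  "scheme_step H p0 F dt dx U \<alpha> i =
     (if i = 0 then U \<alpha> 0 - dt * F (\<chi> \<beta>. pplus dx U \<beta> 0)
      else U \<alpha> i - dt * max (Hplus (H \<alpha>) (p0 \<alpha>) (pminus dx U \<alpha> i))
                                 (Hminus (H \<alpha>) (p0 \<alpha>) (pplus dx U \<alpha> i)))"

end

theory Submission
  imports Defs
begin

lemma lip_isCont:
  assumes "\<forall>x y. \<bar>H x - H y\<bar> \<le> L * \<bar>x - y\<bar>"
  shows "isCont (H::real\<Rightarrow>real) x"
proof (rule continuous_at_eps_delta[THEN iffD2], intro allI impI)
  fix e :: real assume e: "e > 0"
  show "\<exists>d>0. \<forall>x'. dist x' x < d \<longrightarrow> dist (H x') (H x) < e"
  proof (cases "L \<le> 0")
    case True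
    have eq: "\<And>x'. H x' = H x"
    proof -
      fix x'
      have "\<bar>H x' - H x\<bar> \<le> L * \<bar>x' - x\<bar>" using assms by blast
      also have "\<dots> \<le> 0" using True by (simp add: mult_nonpos_nonneg)
      finally show "H x' = H x" by simp
    qed
    show ?thesis
    proof (intro exI[of _ 1] conjI allI impI)
      fix x' show "dist (H x') (H x) < e" by (simp only: eq[of x'] dist_self e)
    qed simp
  next
    case False
    show ?thesis
    proof (rule exI[of _ "e / L"], intro conjI allI impI)
      show "e / L > 0" using e False by simp
      fix x' assume "dist x' x < e / L"
      hence "L * \<bar>x' - x\<bar> < e" using False by (simp add: dist_real_def field_simps)
      thus "dist (H x') (H x) < e" using assms[rule_format, of x' x] by (simp add: dist_real_def)
    qed
  qed
qed

lemma coerc: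
  assumes "filterlim (H::real\<Rightarrow>real) at_top at_infinity"
  shows "\<exists>b. \<forall>x. b \<le> \<bar>x\<bar> \<longrightarrow> c \<le> H x"
proof -
  have "eventually (\<lambda>x. c \<le> H x) at_infinity"
    using assms by (simp add: filterlim_at_top)
  thus ?thesis by (simp add: eventually_at_infinity)
qed

lemma plus_bound:
  assumes hh: "hyp_H H p0" and hp: "Hplus H p0 p \<le> a"
  shows "p \<le> pi_plus H p0 a"
proof -
  define c where "c = max a (Amin H)"
  obtain L where L: "\<forall>x y. \<bar>H x - H y\<bar> \<le> L * \<bar>x - y\<bar>" using hh unfolding hyp_H_def by blast
  have cont: "\<And>x. isCont (Hplus H p0) x"
    unfolding Hplus_def
    by (rule continuous_at_compose[unfolded o_def, OF _ lip_isCont[OF L]]) (intro continuous_intros)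
  obtain b where b: "\<forall>x. b \<le> \<bar>x\<bar> \<longrightarrow> c + 1 \<le> H x"
    using coerc[of H "c+1"] hh unfolding hyp_H_def by blast
  define m where "m = max p p0"
  define y where "y = max m \<bar>b\<bar>"
  have "Hplus H p0 m \<le> c" using hp unfolding m_def c_def Hplus_def by (simp add: max.assoc)
  moreover have "c \<le> Hplus H p0 y"
  proof -
    have y1: "\<bar>b\<bar> \<le> y" "p0 \<le> y" unfolding y_def m_def by auto
    hence "b \<le> \<bar>y\<bar>" by linarith
    hence "c + 1 \<le> H y" using b by blast
    moreover have "max y p0 = y" using y1 by simp
    ultimately show ?thesis unfolding Hplus_def by simp
  qed
  moreover have "m \<le> y" unfolding y_def by simp
  ultimately obtain q where q: "m \<le> q" "q \<le> y" "Hplus H p0 q = c"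
    using IVT[of "Hplus H p0" m c y] cont by blast
  have bdd: "bdd_above {q. Hplus H p0 q = c}"
  proof (rule bdd_aboveI[of _ "max p0 \<bar>b\<bar>"])
    fix q assume "q \<in> {q. Hplus H p0 q = c}"
    hence e: "H (max q p0) = c" by (simp add: Hplus_def)
    show "q \<le> max p0 \<bar>b\<bar>"
    proof (rule ccontr)
      assume "\<not> ?thesis"
      hence "max q p0 = q" "b \<le> \<bar>q\<bar>" by auto
      thus False using b e by force
    qed
  qed
  have "q \<le> pi_plus H p0 a" unfolding pi_plus_def c_def[symmetric]
    using q bdd by (intro cSup_upper) auto
  thus ?thesis using q unfolding m_def by simp
qed

lemma minus_bound:
  assumes hh: "hyp_H H p0" and hp: "Hminus H p0 p \<le> a"
  shows "pi_minus H p0 a \<le> p"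
proof -
  define c where "c = max a (Amin H)"
  obtain L where L: "\<forall>x y. \<bar>H x - H y\<bar> \<le> L * \<bar>x - y\<bar>" using hh unfolding hyp_H_def by blast
  have cont: "\<And>x. isCont (Hminus H p0) x"
    unfolding Hminus_def
    by (rule continuous_at_compose[unfolded o_def, OF _ lip_isCont[OF L]]) (intro continuous_intros)
  obtain b where b: "\<forall>x. b \<le> \<bar>x\<bar> \<longrightarrow> c + 1 \<le> H x"
    using coerc[of H "c+1"] hh unfolding hyp_H_def by blast
  define m where "m = min p p0"
  define y where "y = min m (-\<bar>b\<bar>)"
  have "Hminus H p0 m \<le> c" using hp unfolding m_def c_def Hminus_def by (simp add: min.assoc)
  moreover have "c \<le> Hminus H p0 y"
  proof -
    have y1: "y \<le> -\<bar>b\<bar>" "y \<le> p0" unfolding y_def m_def by auto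
    hence "b \<le> \<bar>y\<bar>" by linarith
    hence "c + 1 \<le> H y" using b by blast
    moreover have "min y p0 = y" using y1 by simp
    ultimately show ?thesis unfolding Hminus_def by simp
  qed
  moreover have "y \<le> m" unfolding y_def by simp
  ultimately obtain q where q: "y \<le> q" "q \<le> m" "Hminus H p0 q = c"
    using IVT2[of "Hminus H p0" m c y] cont by blast
  have bdd: "bdd_below {q. Hminus H p0 q = c}"
  proof (rule bdd_belowI[of _ "min p0 (-\<bar>b\<bar>)"])
    fix q assume "q \<in> {q. Hminus H p0 q = c}"
    hence e: "H (min q p0) = c" by (simp add: Hminus_def)
    show "min p0 (-\<bar>b\<bar>) \<le> q"
    proof (rule ccontr)
      assume "\<not> ?thesis"
      hence "min q p0 = q" "b \<le> \<bar>q\<bar>" by auto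
      thus False using b e by force
    qed
  qed
  have "pi_minus H p0 a \<le> q" unfolding pi_minus_def c_def[symmetric]
    using q bdd by (intro cInf_lower) auto
  thus ?thesis using q unfolding m_def by simp
qed

theorem proposition3p3:
  fixes H :: "'n::finite \<Rightarrow> real \<Rightarrow> real"
    and p0 :: "'n \<Rightarrow> real"
    and F :: "real^'n \<Rightarrow> real"
    and plow :: "real \<Rightarrow> real^'n"
    and U :: "'n \<Rightarrow> nat \<Rightarrow> real"
    and dt dx K :: real
  assumes HH: "\<forall>\<alpha>. hyp_H (H \<alpha>) (p0 \<alpha>)"
    and HF: "hyp_F F"
    and plow: "\<forall>K' p. F p \<le> K' \<longrightarrow> (\<forall>\<alpha>. plow K' $ \<alpha> \<le> p $ \<alpha>)"
    and dt: "dt > 0" and dx: "dx > 0"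
    and junction: "\<forall>\<alpha> \<beta>. U \<alpha> 0 = U \<beta> 0"
    and W: "\<forall>\<alpha> i. K \<le> (scheme_step H p0 F dt dx U \<alpha> i - U \<alpha> i) / dt"
  shows "(\<forall>\<alpha>. \<forall>i\<ge>1. pi_minus (H \<alpha>) (p0 \<alpha>) (-K) \<le> pplus dx U \<alpha> i \<and>
                       pplus dx U \<alpha> i \<le> pi_plus (H \<alpha>) (p0 \<alpha>) (-K)) \<and>
         (\<forall>\<alpha>. plow (-K) $ \<alpha> \<le> pplus dx U \<alpha> 0 \<and>
               pplus dx U \<alpha> 0 \<le> pi_plus (H \<alpha>) (p0 \<alpha>) (-K))"
proof -
  have Wi: "Hplus (H \<alpha>) (p0 \<alpha>) (pminus dx U \<alpha> i) \<le> -K \<and> Hminus (H \<alpha>) (p0 \<alpha>) (pplus dx U \<alpha> i) \<le> -K"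
    if "i \<ge> 1" for \<alpha> i
  proof -
    have "K \<le> (scheme_step H p0 F dt dx U \<alpha> i - U \<alpha> i) / dt" using W by blast
    hence "K * dt \<le> scheme_step H p0 F dt dx U \<alpha> i - U \<alpha> i" using dt by (simp add: pos_le_divide_eq)
    hence "K * dt \<le> - dt * max (Hplus (H \<alpha>) (p0 \<alpha>) (pminus dx U \<alpha> i)) (Hminus (H \<alpha>) (p0 \<alpha>) (pplus dx U \<alpha> i))"
      using that unfolding scheme_step_def by simp
    hence "K \<le> - max (Hplus (H \<alpha>) (p0 \<alpha>) (pminus dx U \<alpha> i)) (Hminus (H \<alpha>) (p0 \<alpha>) (pplus dx U \<alpha> i))"
      using dt by (smt (verit, best) mult_le_cancel_right mult_minus_left mult.commute)
    thus ?thesis using max.cobounded1[of "Hplus (H \<alpha>) (p0 \<alpha>) (pminus dx U \<alpha> i)" "Hminus (H \<alpha>) (p0 \<alpha>) (pplus dx U \<alpha> i)"]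
      max.cobounded2[of "Hplus (H \<alpha>) (p0 \<alpha>) (pminus dx U \<alpha> i)" "Hminus (H \<alpha>) (p0 \<alpha>) (pplus dx U \<alpha> i)"] by linarith
  qed
  have W0: "F (\<chi> \<beta>. pplus dx U \<beta> 0) \<le> -K"
  proof -
    obtain \<alpha> :: 'n where True by blast
    have "K \<le> (scheme_step H p0 F dt dx U \<alpha> 0 - U \<alpha> 0) / dt" using W by blast
    hence "K * dt \<le> scheme_step H p0 F dt dx U \<alpha> 0 - U \<alpha> 0" using dt by (simp add: pos_le_divide_eq)
    hence "K * dt \<le> - dt * F (\<chi> \<beta>. pplus dx U \<beta> 0)"
      unfolding scheme_step_def by simp
    thus ?thesis using dt by (smt (verit, best) mult_le_cancel_right mult_minus_left mult.commute)
  qed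
  have up: "pplus dx U \<alpha> i \<le> pi_plus (H \<alpha>) (p0 \<alpha>) (-K)" for \<alpha> i
  proof -
    have "pplus dx U \<alpha> i = pminus dx U \<alpha> (Suc i)" unfolding pplus_def pminus_def by simp
    thus ?thesis using Wi[of "Suc i" \<alpha>] plus_bound[OF HH[rule_format, of \<alpha>]] by simp
  qed
  show ?thesis
  proof (intro conjI allI impI)
    fix \<alpha> i assume "(1::nat) \<le> i"
    thus "pi_minus (H \<alpha>) (p0 \<alpha>) (-K) \<le> pplus dx U \<alpha> i"
      using Wi minus_bound[OF HH[rule_format, of \<alpha>]] by blast
  next
    fix \<alpha>
    show "plow (-K) $ \<alpha> \<le> pplus dx U \<alpha> 0" using plow W0 by fastforce
  qed (use up in auto)
qed

end
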